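(* Let $S$ be a $1$-synchronizable system. Let $\tau\in T_0(S)$ and $m_1,\dots,m_n\in\Sigma_M$ be such that $\tau\cdot !m_1\cdots !m_n\in T_n(S)$. Then $\tau\cdot !?m_1\cdots !?m_n\in T_0(S)$.
   Context: A message set $M=(\Sigma_M,N,\mathrm{src},\mathrm{dst})$: finite set of messages, $N\ge1$ peers, $\mathrm{src}(a)\neq\mathrm{dst}(a)\in\{1,\dots,N\}$. Actions $!a$ (by peer $\mathrm{src}(a)$), $?a$ (by peer $\mathrm{dst}(a)$); traces are finite action sequences; $!?a$ abbreviates $!a\cdot?a$. For a trace $\tau$, $\pi_!(\tau)$ is the sequence of sent messages; $\mathrm{buf}_{i\to j}(\tau)$ is the word $w$ (if any) with (sent on $i\to j$) $=$ (received on $i\to j$)$\cdot w$. $\tau$ is FIFO ($k$-bounded FIFO) if for all $i,j$ and prefixes $\tau'$, $\mathrm{buf}_{i\to j}(\tau')$ is defined (and has length $\le k$); synchronous if of the form $!?a_1\cdots!?a_k$. A system $S=(P_1,\dots,P_N)$: finite automata $P_i$ (all states accepting) over actions of peer $i$, with one FIFO channel per ordered pair $i\neq j$. A configuration: one control state per peer and contents $w_{i,j}$ of channels; stable if all channels empty. $!a$ ($\mathrm{src}(a)=i,\mathrm{dst}(a)=j$) moves $P_i$ and appends $a$ to $w_{i,j}$; $?a$ moves $P_j$ and removes $a$ from the head of $w_{i,j}$; $c_0$ is the initial configuration. $T_k(S)$ ($k\ge1$): $k$-bounded FIFO traces $\tau$ with $c_0\xrightarrow{\tau}c$ for some $c$;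 $T_0(S)$: synchronous such traces; $T_\omega(S)=\bigcup_kT_k(S)$. $ST_k(S)=\{\pi_!(\tau)\mid\tau\in T_k(S)\}\cup\{(\pi_!(\tau),c)\mid c_0\xrightarrow{\tau}c,\ c\text{ stable},\ \tau\in T_k(S)\}$; $S$ is $1$-synchronizable if $ST_0(S)=ST_1(S)$. *)

theory Defs
  imports Main "HOL-Library.Sublist"
begin

record 'm msgset =
  sigma  :: "'m set"
  npeers :: nat
  src    :: "'m \<Rightarrow> nat"
  dst    :: "'m \<Rightarrow> nat"

definition message_set :: "'m msgset \<Rightarrow> bool" where
  "message_set M \<longleftrightarrow> finite (sigma M) \<and> npeers M \<ge> 1 \<and>
     (\<forall>a\<in>sigma M. src M a \<noteq> dst M a \<and> src M a \<in> {1..npeers M} \<and> dst M a \<in> {1..npeers M})"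

datatype 'm action = Send 'm | Recv 'm

definition actions_of :: "'m msgset \<Rightarrow> nat \<Rightarrow> 'm action set" where
  "actions_of M i = {Send a |a. a \<in> sigma M \<and> src M a = i} \<union> {Recv a |a. a \<in> sigma M \<and> dst M a = i}"

text \<open>A finite automaton (all states accepting) over the actions of a peer.\<close>
record ('s, 'm) peer =
  states :: "'s set"
  init   :: 's
  trans  :: "('s \<times> 'm action \<times> 's) set"

definition peer_wf :: "'m msgset \<Rightarrow> nat \<Rightarrow> ('s, 'm) peer \<Rightarrow> bool" where
  "peer_wf M i P \<longleftrightarrow> finite (states P) \<and> init P \<in> states P \<and>
     trans P \<subseteq> states P \<times> actions_of M i \<times> states P"

definition system :: "'m msgset \<Rightarrow> (nat \<Rightarrow> ('s, 'm) peer) \<Rightarrow> bool" where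
  "system M S \<longleftrightarrow> message_set M \<and> (\<forall>i\<in>{1..npeers M}. peer_wf M i (S i))"

text \<open>Configuration: control state per peer, and contents of channel i \<rightarrow> j.\<close>
type_synonym ('s, 'm) config = "(nat \<Rightarrow> 's) \<times> (nat \<Rightarrow> nat \<Rightarrow> 'm list)"

definition chan_upd :: "(nat \<Rightarrow> nat \<Rightarrow> 'm list) \<Rightarrow> nat \<Rightarrow> nat \<Rightarrow> 'm list \<Rightarrow> (nat \<Rightarrow> nat \<Rightarrow> 'm list)" where
  "chan_upd w i j v = w(i := (w i)(j := v))"

inductive step :: "'m msgset \<Rightarrow> (nat \<Rightarrow> ('s, 'm) peer) \<Rightarrow> ('s, 'm) config \<Rightarrow> 'm action \<Rightarrow> ('s, 'm) config \<Rightarrow> bool"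
  for M S where
  send: "(q (src M a), Send a, p) \<in> trans (S (src M a)) \<Longrightarrow>
     step M S (q, w) (Send a)
       (q(src M a := p), chan_upd w (src M a) (dst M a) (w (src M a) (dst M a) @ [a]))"
| recv: "(q (dst M a), Recv a, p) \<in> trans (S (dst M a)) \<Longrightarrow> w (src M a) (dst M a) = a # u \<Longrightarrow>
     step M S (q, w) (Recv a)
       (q(dst M a := p), chan_upd w (src M a) (dst M a) u)"

inductive run :: "'m msgset \<Rightarrow> (nat \<Rightarrow> ('s, 'm) peer) \<Rightarrow> ('s, 'm) config \<Rightarrow> 'm action list \<Rightarrow> ('s, 'm) config \<Rightarrow> bool"
  for M S where
  run_nil: "run M S c [] c"
| run_cons: "step M S c x c' \<Longrightarrow> run M S c' t c'' \<Longrightarrow> run M S c (x # t) c''"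

definition init_config :: "(nat \<Rightarrow> ('s, 'm) peer) \<Rightarrow> ('s, 'm) config" where
  "init_config S = ((\<lambda>i. init (S i)), (\<lambda>i j. []))"

definition stable :: "('s, 'm) config \<Rightarrow> bool" where
  "stable c \<longleftrightarrow> (\<forall>i j. snd c i j = [])"

fun sends :: "'m action list \<Rightarrow> 'm list" where
  "sends [] = []"
| "sends (Send a # t) = a # sends t"
| "sends (Recv a # t) = sends t"

fun recvs :: "'m action list \<Rightarrow> 'm list" where
  "recvs [] = []"
| "recvs (Send a # t) = recvs t"
| "recvs (Recv a # t) = a # recvs t"

abbreviation send_proj :: "'m action list \<Rightarrow> 'm list" where
  "send_proj \<equiv> sends"

definition sent_on :: "'m msgset \<Rightarrow> nat \<Rightarrow> nat \<Rightarrow> 'm action list \<Rightarrow> 'm list" where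
  "sent_on M i j t = filter (\<lambda>a. src M a = i \<and> dst M a = j) (sends t)"

definition recv_on :: "'m msgset \<Rightarrow> nat \<Rightarrow> nat \<Rightarrow> 'm action list \<Rightarrow> 'm list" where
  "recv_on M i j t = filter (\<lambda>a. src M a = i \<and> dst M a = j) (recvs t)"

definition buf :: "'m msgset \<Rightarrow> nat \<Rightarrow> nat \<Rightarrow> 'm action list \<Rightarrow> 'm list option" where
  "buf M i j t = (if \<exists>w. sent_on M i j t = recv_on M i j t @ w
                  then Some (THE w. sent_on M i j t = recv_on M i j t @ w) else None)"

definition fifo_trace :: "'m msgset \<Rightarrow> 'm action list \<Rightarrow> bool" where
  "fifo_trace M t \<longleftrightarrow> (\<forall>t' i j. prefix t' t \<longrightarrow> buf M i j t' \<noteq> None)"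

definition bounded_fifo_trace :: "'m msgset \<Rightarrow> nat \<Rightarrow> 'm action list \<Rightarrow> bool" where
  "bounded_fifo_trace M k t \<longleftrightarrow>
     (\<forall>t' i j. prefix t' t \<longrightarrow> (\<exists>w. buf M i j t' = Some w \<and> length w \<le> k))"

text \<open>!?a = !a \<cdot> ?a\<close>
definition sync_seq :: "'m list \<Rightarrow> 'm action list" where
  "sync_seq as = concat (map (\<lambda>a. [Send a, Recv a]) as)"

definition synchronous :: "'m action list \<Rightarrow> bool" where
  "synchronous t \<longleftrightarrow> (\<exists>as. t = sync_seq as)"

definition T :: "'m msgset \<Rightarrow> (nat \<Rightarrow> ('s, 'm) peer) \<Rightarrow> nat \<Rightarrow> 'm action list set" where
  "T M S k = {t. (if k = 0 then synchronous t else bounded_fifo_trace M k t) \<and>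
                 (\<exists>c. run M S (init_config S) t c)}"

definition ST :: "'m msgset \<Rightarrow> (nat \<Rightarrow> ('s, 'm) peer) \<Rightarrow> nat \<Rightarrow> ('m list + ('m list \<times> ('s, 'm) config)) set" where
  "ST M S k = {Inl (send_proj t) |t. t \<in> T M S k} \<union>
              {Inr (send_proj t, c) |t c. t \<in> T M S k \<and> run M S (init_config S) t c \<and> stable c}"

definition synchronizable1 :: "'m msgset \<Rightarrow> (nat \<Rightarrow> ('s, 'm) peer) \<Rightarrow> bool" where
  "synchronizable1 M S \<longleftrightarrow> ST M S 0 = ST M S 1"

end

theory Submission
  imports Defs
begin


fun xt :: "('m \<times> bool) list \<Rightarrow> 'm action list" where
  "xt [] = []"
| "xt ((m,b)#f) = (if b then [Send m, Recv m] else [Send m]) @ xt f"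

lemma xt_append[simp]: "xt (f @ g) = xt f @ xt g"
  by (induction f rule: xt.induct) auto

lemma sync_seq_xt: "sync_seq as = xt (map (\<lambda>a. (a,True)) as)"
  by (induction as) (auto simp: sync_seq_def)

lemma send_xt: "map Send ms = xt (map (\<lambda>a. (a,False)) ms)"
  by (induction ms) auto

lemma sends_append[simp]: "sends (a @ b) = sends a @ sends b"
  by (induction a rule: sends.induct) auto

lemma recvs_append[simp]: "recvs (a @ b) = recvs a @ recvs b"
  by (induction a rule: recvs.induct) auto

lemma sends_xt: "sends (xt f) = map fst f"
  by (induction f rule: xt.induct) auto

lemma recvs_xt: "recvs (xt f) = map fst (filter snd f)"
  by (induction f rule: xt.induct) auto

lemma sends_sync: "sends (sync_seq as) = as"
  by (simp add: sync_seq_xt sends_xt comp_def)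

lemma sync_seq_append: "sync_seq (a @ b) = sync_seq a @ sync_seq b"
  by (simp add: sync_seq_def)

fun good :: "'m msgset \<Rightarrow> ('m \<times> bool) list \<Rightarrow> bool" where
  "good M [] = True"
| "good M ((m,b)#f) = (good M f \<and> (\<not>b \<longrightarrow> (\<forall>x\<in>set f. (src M (fst x), dst M (fst x)) \<noteq> (src M m, dst M m))))"

lemma good_chan:
  "good M f \<Longrightarrow> \<exists>w. filter (\<lambda>a. src M a = i \<and> dst M a = j) (map fst f)
      = filter (\<lambda>a. src M a = i \<and> dst M a = j) (map fst (filter snd f)) @ w \<and> length w \<le> 1"
proof (induction f)
  case Nil
  then show ?case by auto
next
  case (Cons p f)
  obtain m b where p: "p = (m,b)" by (cases p)
  from Cons.prems p have gf: "good M f" by simp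
  from Cons.IH[OF gf] obtain w where w: "filter (\<lambda>a. src M a = i \<and> dst M a = j) (map fst f)
      = filter (\<lambda>a. src M a = i \<and> dst M a = j) (map fst (filter snd f)) @ w" "length w \<le> 1" by blast
  show ?case
  proof (cases "b \<or> \<not> (src M m = i \<and> dst M m = j)")
    case True
    then show ?thesis using w p by auto
  next
    case False
    then have nb: "\<not> b" and ch: "src M m = i" "dst M m = j" by auto
    with Cons.prems p have all: "\<forall>x\<in>set f. (src M (fst x), dst M (fst x)) \<noteq> (i, j)" by auto
    have e1: "filter (\<lambda>a. src M a = i \<and> dst M a = j) (map fst f) = []"
      using all by (auto simp: filter_empty_conv)
    have e2: "filter (\<lambda>a. src M a = i \<and> dst M a = j) (map fst (filter snd f)) = []"
      using all by (auto simp: filter_empty_conv)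
    show ?thesis using p nb ch e1 e2 by (intro exI[of _ "[m]"]) auto
  qed
qed

lemma buf_some: "sent_on M i j t = recv_on M i j t @ w \<Longrightarrow> buf M i j t = Some w"
  unfolding buf_def by auto

lemma prefix_xt:
  "prefix t' (xt g) \<Longrightarrow> \<exists>h. t' = xt h \<and> fst ` set h \<subseteq> fst ` set g \<and> (good M g \<longrightarrow> good M h)"
proof (induction g arbitrary: t')
  case Nil
  then show ?case by (intro exI[of _ "[]"]) auto
next
  case (Cons p g)
  obtain m b where p: "p = (m,b)" by (cases p)
  let ?blk = "(if b then [Send m, Recv m] else [Send m])"
  from Cons.prems p have "prefix t' (?blk @ xt g)" by simp
  then have "prefix t' ?blk \<or> (\<exists>us. t' = ?blk @ us \<and> prefix us (xt g))"
    by (simp add: prefix_append)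
  then show ?case
  proof
    assume "prefix t' ?blk"
    then have "t' = [] \<or> t' = [Send m] \<or> (b \<and> t' = [Send m, Recv m])"
      by (cases b) (auto simp: prefix_Cons)
    then show ?thesis
    proof (elim disjE)
      assume "t' = []" then show ?thesis by (intro exI[of _ "[]"]) auto
    next
      assume "t' = [Send m]" then show ?thesis using p by (intro exI[of _ "[(m,False)]"]) auto
    next
      assume "b \<and> t' = [Send m, Recv m]" then show ?thesis using p by (intro exI[of _ "[(m,True)]"]) auto
    qed
  next
    assume "\<exists>us. t' = ?blk @ us \<and> prefix us (xt g)"
    then obtain us where us: "t' = ?blk @ us" "prefix us (xt g)" by blast
    from Cons.IH[OF us(2)] obtain h where h: "us = xt h" "fst ` set h \<subseteq> fst ` set g"
      "good M g \<longrightarrow> good M h" by blast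
    show ?thesis
    proof (intro exI[of _ "(m,b)#h"] conjI)
      show "t' = xt ((m, b) # h)" using us h by simp
      show "fst ` set ((m, b) # h) \<subseteq> fst ` set (p # g)" using h p by auto
      show "good M (p # g) \<longrightarrow> good M ((m, b) # h)"
      proof
        assume gp: "good M (p # g)"
        have "\<forall>x\<in>set h. (src M (fst x), dst M (fst x)) \<noteq> (src M m, dst M m)" if nb: "\<not> b"
        proof
          fix x assume "x \<in> set h"
          then have "fst x \<in> fst ` set g" using h by auto
          then obtain y where "y \<in> set g" "fst y = fst x" by auto
          then show "(src M (fst x), dst M (fst x)) \<noteq> (src M m, dst M m)"
            using gp p nb by auto
        qed
        then show "good M ((m, b) # h)" using gp p h by auto
      qed
    qed
  qed
qed

lemma good_bounded: "good M g \<Longrightarrow> bounded_fifo_trace M 1 (xt g)"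
  unfolding bounded_fifo_trace_def
proof (intro allI impI)
  fix t' i j assume g: "good M g" and pf: "prefix t' (xt g)"
  from prefix_xt[OF pf] g obtain h where h: "t' = xt h" "good M h" by blast
  from good_chan[OF h(2), of i j] obtain w where w:
    "filter (\<lambda>a. src M a = i \<and> dst M a = j) (map fst h)
      = filter (\<lambda>a. src M a = i \<and> dst M a = j) (map fst (filter snd h)) @ w" "length w \<le> 1" by blast
  have "sent_on M i j t' = recv_on M i j t' @ w"
    using w h unfolding sent_on_def recv_on_def by (simp add: sends_xt recvs_xt)
  then show "\<exists>w. buf M i j t' = Some w \<and> length w \<le> 1" using buf_some w(2) by blast
qed



fun cexec :: "'m msgset \<Rightarrow> (nat \<Rightarrow> nat \<Rightarrow> 'm list) \<Rightarrow> 'm action list \<Rightarrow> (nat \<Rightarrow> nat \<Rightarrow> 'm list) option" where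
  "cexec M w [] = Some w"
| "cexec M w (Send a # t) = cexec M (chan_upd w (src M a) (dst M a) (w (src M a) (dst M a) @ [a])) t"
| "cexec M w (Recv a # t) = (case w (src M a) (dst M a) of [] \<Rightarrow> None
     | b # u \<Rightarrow> (if b = a then cexec M (chan_upd w (src M a) (dst M a) u) t else None))"

lemma cexec_append: "cexec M w (a @ b) = (case cexec M w a of None \<Rightarrow> None | Some w' \<Rightarrow> cexec M w' b)"
  by (induction M w a rule: cexec.induct) (auto split: list.split option.split)

lemma cexec_sends: "cexec M w (map Send ms) \<noteq> None"
  by (induction ms arbitrary: w) auto

lemma chan_upd_apply: "chan_upd w i j v k l = (if k = i \<and> l = j then v else w k l)"
  by (simp add: chan_upd_def)

lemma chan_upd_back: "w i j = [] \<Longrightarrow> chan_upd (chan_upd w i j v) i j [] = w"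
  by (auto simp: chan_upd_def fun_eq_iff)

lemma cexec_good: "good M h \<Longrightarrow> (\<forall>x\<in>set h. snd x \<longrightarrow> w (src M (fst x)) (dst M (fst x)) = []) \<Longrightarrow> cexec M w (xt h) \<noteq> None"
proof (induction h arbitrary: w)
  case Nil
  then show ?case by simp
next
  case (Cons p h)
  obtain m b where p: "p = (m,b)" by (cases p)
  show ?case
  proof (cases b)
    case True
    then have e: "w (src M m) (dst M m) = []" using Cons.prems p by auto
    have "cexec M w (xt h) \<noteq> None" using Cons.IH Cons.prems p by auto
    then show ?thesis using p True e by (simp add: chan_upd_apply chan_upd_back)
  next
    case False
    let ?w = "chan_upd w (src M m) (dst M m) (w (src M m) (dst M m) @ [m])"
    have "\<forall>x\<in>set h. snd x \<longrightarrow> ?w (src M (fst x)) (dst M (fst x)) = []"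
      using Cons.prems p False by (auto simp: chan_upd_apply)
    then have "cexec M ?w (xt h) \<noteq> None" using Cons.IH Cons.prems p by auto
    then show ?thesis using p False by simp
  qed
qed

inductive lrun :: "('s, 'm) peer \<Rightarrow> 's \<Rightarrow> 'm action list \<Rightarrow> 's \<Rightarrow> bool" for P where
  lnil: "lrun P q [] q"
| lcons: "(q, x, p) \<in> trans P \<Longrightarrow> lrun P p w q' \<Longrightarrow> lrun P q (x # w) q'"

definition lexec :: "('s, 'm) peer \<Rightarrow> 's \<Rightarrow> 'm action list \<Rightarrow> bool" where
  "lexec P q w \<longleftrightarrow> (\<exists>q'. lrun P q w q')"

lemma lexec_nil[simp]: "lexec P q []"
  by (auto simp: lexec_def intro: lrun.intros)

lemma lexec_cons[simp]: "lexec P q (x # w) \<longleftrightarrow> (\<exists>p. (q, x, p) \<in> trans P \<and> lexec P p w)"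
  unfolding lexec_def
proof
  assume "\<exists>q'. lrun P q (x # w) q'"
  then obtain q' where "lrun P q (x # w) q'" by blast
  then show "\<exists>p. (q, x, p) \<in> trans P \<and> (\<exists>q'. lrun P p w q')"
    by (cases rule: lrun.cases) auto
qed (auto intro: lrun.intros)

lemma lexec_appendD: "lexec P q (u @ v) \<Longrightarrow> lexec P q u"
  by (induction u arbitrary: q) auto

lemma lexec_prefix: "prefix a b \<Longrightarrow> lexec P q b \<Longrightarrow> lexec P q a"
  by (auto simp: prefix_def dest: lexec_appendD)

fun actor :: "'m msgset \<Rightarrow> 'm action \<Rightarrow> nat" where
  "actor M (Send a) = src M a"
| "actor M (Recv a) = dst M a"

definition proj :: "'m msgset \<Rightarrow> nat \<Rightarrow> 'm action list \<Rightarrow> 'm action list" where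
  "proj M i t = filter (\<lambda>x. actor M x = i) t"

lemma proj_append[simp]: "proj M i (a @ b) = proj M i a @ proj M i b"
  by (simp add: proj_def)

lemma proj_Cons: "proj M i (x # t) = (if actor M x = i then x # proj M i t else proj M i t)"
  by (simp add: proj_def)

lemma runA: "run M S c t c' \<Longrightarrow> lexec (S i) (fst c i) (proj M i t) \<and> cexec M (snd c) t \<noteq> None"
proof (induction rule: run.induct)
  case (run_nil c)
  then show ?case by (simp add: proj_def)
next
  case (run_cons c x c' t c'')
  from run_cons.hyps(1) show ?case
  proof (cases rule: step.cases)
    case (send q a p w)
    then show ?thesis using run_cons.IH by (auto simp: proj_Cons)
  next
    case (recv q a p w u)
    then show ?thesis using run_cons.IH by (auto simp: proj_Cons)
  qed
qed

lemma runB: "(\<forall>i. lexec (S i) (q i) (proj M i t)) \<Longrightarrow> cexec M w t \<noteq> None \<Longrightarrow> \<exists>c. run M S (q, w) t c"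
proof (induction t arbitrary: q w)
  case Nil
  then show ?case by (auto intro: run.intros)
next
  case (Cons x t)
  show ?case
  proof (cases x)
    case (Send a)
    let ?i = "src M a"
    from Cons.prems(1)[rule_format, of ?i] Send obtain p where
      p: "(q ?i, Send a, p) \<in> trans (S ?i)" "lexec (S ?i) p (proj M ?i t)"
      by (auto simp: proj_Cons)
    let ?q = "q(?i := p)"
    let ?w = "chan_upd w ?i (dst M a) (w ?i (dst M a) @ [a])"
    have "\<forall>j. lexec (S j) (?q j) (proj M j t)"
    proof
      fix j show "lexec (S j) (?q j) (proj M j t)"
        using p Cons.prems(1)[rule_format, of j] Send by (cases "j = ?i") (auto simp: proj_Cons)
    qed
    moreover have "cexec M ?w t \<noteq> None" using Cons.prems(2) Send by simp
    ultimately obtain c where "run M S (?q, ?w) t c" using Cons.IH by blast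
    moreover have "step M S (q, w) (Send a) (?q, ?w)" using p(1) by (rule step.send)
    ultimately show ?thesis using Send by (metis run.run_cons)
  next
    case (Recv a)
    let ?i = "dst M a"
    from Cons.prems(1)[rule_format, of ?i] Recv obtain p where
      p: "(q ?i, Recv a, p) \<in> trans (S ?i)" "lexec (S ?i) p (proj M ?i t)"
      by (auto simp: proj_Cons)
    from Cons.prems(2) Recv obtain u where u: "w (src M a) ?i = a # u"
      and ce: "cexec M (chan_upd w (src M a) ?i u) t \<noteq> None"
      by (auto split: list.splits if_splits)
    let ?q = "q(?i := p)"
    let ?w = "chan_upd w (src M a) ?i u"
    have "\<forall>j. lexec (S j) (?q j) (proj M j t)"
    proof
      fix j show "lexec (S j) (?q j) (proj M j t)"
        using p Cons.prems(1)[rule_format, of j] Recv by (cases "j = ?i") (auto simp: proj_Cons)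
    qed
    then obtain c where "run M S (?q, ?w) t c" using Cons.IH ce by blast
    moreover have "step M S (q, w) (Recv a) (?q, ?w)" using p(1) u by (rule step.recv)
    ultimately show ?thesis using Recv by (metis run.run_cons)
  qed
qed



fun marks :: "'m msgset \<Rightarrow> 'm list \<Rightarrow> ('m \<times> bool) list" where
  "marks M [] = []"
| "marks M (m # ms) = (m, \<not> (\<forall>m'\<in>set ms. src M m' \<noteq> src M m)) # marks M ms"

fun del :: "'m msgset \<Rightarrow> nat \<Rightarrow> 'm list \<Rightarrow> 'm list" where
  "del M i [] = []"
| "del M i (m # ms) = (if (\<forall>m'\<in>set ms. src M m' \<noteq> src M m) \<and> src M m \<noteq> i then del M i ms else m # del M i ms)"

lemma map_fst_marks: "map fst (marks M ms) = ms"
  by (induction ms) auto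

lemma good_marks: "good M (marks M ms)"
proof (induction ms)
  case Nil then show ?case by simp
next
  case (Cons m ms)
  have "\<forall>x\<in>set (marks M ms). fst x \<in> set ms"
    using map_fst_marks[of M ms] by (metis image_eqI list.set_map)
  then show ?case using Cons by auto
qed

lemma good_true: "good M (map (\<lambda>a. (a, True)) as @ g) = good M g"
  by (induction as) auto

lemma del_subset: "set (del M i ms) \<subseteq> set ms"
  by (induction ms) auto

lemma del_len: "length (del M i ms) \<le> length ms"
  by (induction ms) auto

lemma del_len_less: "\<exists>m\<in>set ms. src M m \<noteq> i \<Longrightarrow> length (del M i ms) < length ms"
proof (induction ms)
  case Nil then show ?case by simp
next
  case (Cons m ms)
  show ?case
  proof (cases "\<exists>m\<in>set ms. src M m \<noteq> i")
    case True
    then show ?thesis using Cons.IH by auto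
  next
    case False
    then have "src M m \<noteq> i" using Cons.prems by auto
    with False have "del M i (m # ms) = del M i ms" by auto
    then show ?thesis using del_len[of M i ms] by simp
  qed
qed

lemma del_prefix: "prefix (filter (\<lambda>m. src M m = j) (del M i ms)) (filter (\<lambda>m. src M m = j) ms)"
proof (induction ms)
  case Nil then show ?case by simp
next
  case (Cons m ms)
  show ?case
  proof (cases "(\<forall>m'\<in>set ms. src M m' \<noteq> src M m) \<and> src M m \<noteq> i")
    case True
    then have d: "del M i (m # ms) = del M i ms" by simp
    show ?thesis
    proof (cases "src M m = j")
      case True
      have "filter (\<lambda>m. src M m = j) (del M i ms) = []"
        using del_subset[of M i ms] \<open>(\<forall>m'\<in>set ms. src M m' \<noteq> src M m) \<and> src M m \<noteq> i\<close> True
        by (auto simp: filter_empty_conv)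
      then show ?thesis using d by simp
    next
      case False
      then show ?thesis using d Cons.IH by simp
    qed
  next
    case False
    then show ?thesis using Cons.IH by auto
  qed
qed

lemma proj_xt_del: "\<forall>m\<in>set ms. src M m \<noteq> dst M m \<Longrightarrow>
  proj M i (xt (map (\<lambda>a. (a, True)) (del M i ms))) = proj M i (xt (marks M ms))"
proof (induction ms)
  case Nil then show ?case by simp
next
  case (Cons m ms)
  have sdm: "src M m \<noteq> dst M m" using Cons.prems by simp
  have "\<forall>m\<in>set ms. src M m \<noteq> dst M m" using Cons.prems by (meson list.set_intros(2))
  then have IH: "proj M i (xt (map (\<lambda>a. (a, True)) (del M i ms))) = proj M i (xt (marks M ms))"
    by (rule Cons.IH)
  show ?case
  proof (cases "(\<forall>m'\<in>set ms. src M m' \<noteq> src M m)")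
    case True
    then show ?thesis using IH sdm by (cases "src M m = i") (auto simp: proj_def)
  next
    case False
    then show ?thesis using IH sdm by (auto simp: proj_def)
  qed
qed

lemma proj_xt_false: "proj M i (xt (map (\<lambda>a. (a, False)) ms)) = map Send (filter (\<lambda>m. src M m = i) ms)"
  by (induction ms) (auto simp: proj_def)

lemma proj_marks_all: "\<forall>m\<in>set ms. src M m = i \<and> src M m \<noteq> dst M m \<Longrightarrow>
  proj M i (xt (marks M ms)) = proj M i (xt (map (\<lambda>a. (a, False)) ms))"
proof (induction ms)
  case Nil then show ?case by simp
next
  case (Cons m ms)
  have "\<forall>m\<in>set ms. src M m = i \<and> src M m \<noteq> dst M m" using Cons.prems by (meson list.set_intros(2))
  then have "proj M i (xt (marks M ms)) = proj M i (xt (map (\<lambda>a. (a, False)) ms))" by (rule Cons.IH)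
  then show ?case using Cons.prems by (auto simp: proj_def)
qed

lemma sync_use:
  assumes "synchronizable1 M S" "run M S (init_config S) \<rho> c" "bounded_fifo_trace M 1 \<rho>"
  shows "\<exists>c'. run M S (init_config S) (sync_seq (sends \<rho>)) c'"
proof -
  have ex: "Ex (run M S (init_config S) \<rho>)" using assms(2) by blast
  obtain a b where ab: "c = (a, b)" by (cases c)
  have "\<rho> \<in> T M S 1" using assms(2,3) ab by (auto simp: T_def)
  then have "Inl (sends \<rho>) \<in> ST M S 1" by (auto simp: ST_def)
  then have "Inl (sends \<rho>) \<in> ST M S 0" using assms(1) by (simp add: synchronizable1_def)
  then obtain t where t: "sends \<rho> = sends t" "t \<in> T M S 0" by (auto simp: ST_def)
  then obtain as c' where "t = sync_seq as" "run M S (init_config S) t c'"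
    by (auto simp: T_def synchronous_def)
  then show ?thesis using t(1) by (metis sends_sync)
qed

lemma main:
  assumes sync: "synchronizable1 M S"
  shows "\<forall>ms. length ms = N \<longrightarrow> (\<forall>m\<in>set ms. src M m \<noteq> dst M m) \<longrightarrow>
     (\<exists>c. run M S (init_config S) (sync_seq \<sigma> @ map Send ms) c) \<longrightarrow>
     (\<exists>c. run M S (init_config S) (sync_seq \<sigma> @ sync_seq ms) c)"
proof (induction N rule: less_induct)
  case (less N)
  show ?case
  proof (intro allI impI)
    fix ms :: "'a list"
    assume len: "length ms = N" and sd: "\<forall>m\<in>set ms. src M m \<noteq> dst M m"
      and ex: "\<exists>c. run M S (init_config S) (sync_seq \<sigma> @ map Send ms) c"
    define F where "F = map (\<lambda>a. (a, True)) \<sigma>"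
    define q0 where "q0 = (\<lambda>i. init (S i))"
    define w0 :: "nat \<Rightarrow> nat \<Rightarrow> 'a list" where "w0 = (\<lambda>i j. [])"
    have ic: "init_config S = (q0, w0)" by (simp add: init_config_def q0_def w0_def)
    from ex obtain c0 where "run M S (init_config S) (sync_seq \<sigma> @ map Send ms) c0" by blast
    then have r0: "run M S (q0, w0) (xt F @ xt (map (\<lambda>a. (a, False)) ms)) c0"
      by (simp add: ic F_def sync_seq_xt send_xt)
    have orig: "lexec (S j) (q0 j) (proj M j (xt F) @ map Send (filter (\<lambda>m. src M m = j) ms))" for j
      using runA[OF r0, of j] by (simp add: proj_xt_false)
    have cF: "cexec M w0 (xt F) \<noteq> None"
      by (rule cexec_good) (auto simp: F_def w0_def good_true[where g = "[]", simplified])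
    let ?\<rho> = "xt (F @ marks M ms)"
    have gr: "good M (F @ marks M ms)" by (simp add: F_def good_true good_marks)
    have peers: "lexec (S i) (q0 i) (proj M i ?\<rho>)" for i
    proof (cases "\<exists>m\<in>set ms. src M m \<noteq> i")
      case True
      let ?ms' = "del M i ms"
      have lt: "length ?ms' < N" using del_len_less[OF True] len by linarith
      have sd': "\<forall>m\<in>set ?ms'. src M m \<noteq> dst M m" using sd del_subset[of M i ms] by blast
      have "\<forall>j. lexec (S j) (q0 j) (proj M j (xt F @ map Send ?ms'))"
      proof
        fix j
        have "prefix (proj M j (xt F) @ map Send (filter (\<lambda>m. src M m = j) ?ms'))
                     (proj M j (xt F) @ map Send (filter (\<lambda>m. src M m = j) ms))"
          using del_prefix[of M j i ms] by (simp add: map_mono_prefix)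
        then have "lexec (S j) (q0 j) (proj M j (xt F) @ map Send (filter (\<lambda>m. src M m = j) ?ms'))"
          by (rule lexec_prefix[OF _ orig])
        then show "lexec (S j) (q0 j) (proj M j (xt F @ map Send ?ms'))"
          by (simp add: send_xt proj_xt_false)
      qed
      moreover have "cexec M w0 (xt F @ map Send ?ms') \<noteq> None"
      proof -
        obtain w' where "cexec M w0 (xt F) = Some w'" using cF by blast
        then show ?thesis using cexec_sends[of M w' ?ms'] by (simp add: cexec_append)
      qed
      ultimately obtain c1 where "run M S (q0, w0) (xt F @ map Send ?ms') c1"
        using runB[of S q0 M "xt F @ map Send ?ms'" w0] by blast
      then have "run M S (init_config S) (sync_seq \<sigma> @ map Send ?ms') c1"
        by (simp add: ic F_def sync_seq_xt)
      then have "\<exists>c. run M S (init_config S) (sync_seq \<sigma> @ map Send ?ms') c"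
        by blast
      moreover have IH': "(\<forall>m\<in>set ?ms'. src M m \<noteq> dst M m) \<longrightarrow>
          (\<exists>c. run M S (init_config S) (sync_seq \<sigma> @ map Send ?ms') c) \<longrightarrow>
          (\<exists>c. run M S (init_config S) (sync_seq \<sigma> @ sync_seq ?ms') c)"
        using less.IH[OF lt] by blast
      ultimately obtain c2 where "run M S (init_config S) (sync_seq \<sigma> @ sync_seq ?ms') c2"
        using sd' by blast
      then have "run M S (q0, w0) (xt F @ xt (map (\<lambda>a. (a, True)) ?ms')) c2"
        using ic by (simp add: F_def sync_seq_xt)
      from runA[OF this, of i] have
        "lexec (S i) (q0 i) (proj M i (xt F) @ proj M i (xt (map (\<lambda>a. (a, True)) ?ms')))" by simp
      then show ?thesis using proj_xt_del[OF sd, of i] by simp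
    next
      case False
      then have "\<forall>m\<in>set ms. src M m = i \<and> src M m \<noteq> dst M m" using sd by auto
      from proj_marks_all[OF this] orig[of i] show ?thesis
        by (simp add: proj_xt_false)
    qed
    have "cexec M w0 ?\<rho> \<noteq> None"
      by (rule cexec_good[OF gr]) (simp add: w0_def)
    then obtain c where "run M S (q0, w0) ?\<rho> c" using runB[of S q0 M ?\<rho> w0] peers by blast
    then have "run M S (init_config S) ?\<rho> c" using ic by simp
    from sync_use[OF sync this good_bounded[OF gr]]
    obtain c' where rc: "run M S (init_config S) (sync_seq (sends ?\<rho>)) c'" by blast
    have eqs: "sends ?\<rho> = \<sigma> @ ms"
      by (simp add: sends_xt F_def map_fst_marks comp_def)
    have "sync_seq (sends ?\<rho>) = sync_seq \<sigma> @ sync_seq ms"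
      by (simp only: eqs sync_seq_append)
    then have "run M S (init_config S) (sync_seq \<sigma> @ sync_seq ms) c'"
      using rc by (simp only:)
    then show "\<exists>c. run M S (init_config S) (sync_seq \<sigma> @ sync_seq ms) c"
      by blast
  qed
qed

theorem lemma4p7:
  fixes M :: "'m msgset" and S :: "nat \<Rightarrow> ('s, 'm) peer"
    and \<tau> :: "'m action list" and ms :: "'m list" and n :: nat
  assumes "system M S"
    and "synchronizable1 M S"
    and "\<tau> \<in> T M S 0"
    and "set ms \<subseteq> sigma M" and "length ms = n"
    and "\<tau> @ map Send ms \<in> T M S n"
  shows "\<tau> @ sync_seq ms \<in> T M S 0"
proof -
  from assms(3) obtain \<sigma> where tau: "\<tau> = sync_seq \<sigma>"
    by (auto simp: T_def synchronous_def)
  have sd: "\<forall>m\<in>set ms. src M m \<noteq> dst M m"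
    using assms(1,4) by (auto simp: system_def message_set_def)
  from assms(6) have "\<exists>c. run M S (init_config S) (sync_seq \<sigma> @ map Send ms) c"
    unfolding T_def tau by blast
  then have "\<exists>c. run M S (init_config S) (sync_seq \<sigma> @ sync_seq ms) c"
    using main[OF assms(2)] sd by blast
  moreover have "synchronous (sync_seq \<sigma> @ sync_seq ms)"
    by (metis sync_seq_append synchronous_def)
  ultimately show ?thesis unfolding T_def tau by simp
qed

end
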